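(* Let $a\in(0,\infty)$ and $b\in\mathbb{Z}\cap[0,a+1)$. Then (i) $\exp\left(-\frac{b^3}{6a^2}\right)\le \dfrac{a^{\overline{b}}}{a^b\exp\left(\frac{b(b-1)}{2a}\right)}\le 1$; (ii) $1\le \dfrac{a^{\overline{b}}}{a^b\exp\left(\frac{b(b-1)}{2a}-\frac{b(b-1)(2b-1)}{12a^2}\right)}\le \exp\left(\frac{b^4}{12a^3}\right)$.
   Context: $a^{\overline{b}}=a(a+1)\cdots(a+b-1)$ denotes the rising factorial (with $a^{\overline{0}}=1$). *)

theory Defs
  imports Complex_Main
begin

end

theory Submission
  imports Defs
begin

lemma ln_lower2:
  fixes x :: real assumes "0 \<le> x" shows "x - x^2/2 \<le> ln (1+x)"
proof -
  let ?f = "\<lambda>t::real. ln (1+t) - t + t^2/2"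
  have "?f 0 \<le> ?f x"
  proof (rule DERIV_nonneg_imp_nondecreasing[OF assms])
    fix t :: real assume t: "0 \<le> t" "t \<le> x"
    have "DERIV ?f t :> (1/(1+t) - 1 + t)" using t
      by (auto intro!: derivative_eq_intros simp: field_simps)
    moreover have "1/(1+t) - 1 + t = t^2/(1+t)" using t by (simp add: field_simps power2_eq_square)
    moreover have "t^2/(1+t) \<ge> 0" using t by simp
    ultimately show "\<exists>y. DERIV ?f t :> y \<and> y \<ge> 0" by metis
  qed
  then show ?thesis by simp
qed

lemma ln_upper3:
  fixes x :: real assumes "0 \<le> x" shows "ln (1+x) \<le> x - x^2/2 + x^3/3"
proof -
  let ?f = "\<lambda>t::real. t - t^2/2 + t^3/3 - ln (1+t)"
  have "?f 0 \<le> ?f x"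
  proof (rule DERIV_nonneg_imp_nondecreasing[OF assms])
    fix t :: real assume t: "0 \<le> t" "t \<le> x"
    have "DERIV ?f t :> (1 - t + t^2 - 1/(1+t))" using t
      by (auto intro!: derivative_eq_intros simp: field_simps power2_eq_square)
    moreover have "1 - t + t^2 - 1/(1+t) = t^3/(1+t)" using t
      by (simp add: field_simps power2_eq_square power3_eq_cube)
    moreover have "t^3/(1+t) \<ge> 0" using t by simp
    ultimately show "\<exists>y. DERIV ?f t :> y \<and> y \<ge> 0" by metis
  qed
  then show ?thesis by simp
qed

lemma sum1: "(\<Sum>k<b. real k) = real b * (real b - 1) / 2"
  by (induction b) (auto simp: field_simps)
lemma sum2: "(\<Sum>k<b. real k ^ 2) = real b * (real b - 1) * (2 * real b - 1) / 6"
  by (induction b) (auto simp: field_simps power2_eq_square)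
lemma sum3: "(\<Sum>k<b. real k ^ 3) = (real b * (real b - 1))^2 / 4"
  by (induction b) (auto simp: field_simps power2_eq_square power3_eq_cube)

theorem lemma2:
  fixes a :: real and b :: nat
  assumes "a > 0" and "real b < a + 1"
  shows "(exp (- (real b ^ 3) / (6 * a ^ 2))
           \<le> pochhammer a b / (a ^ b * exp (real b * (real b - 1) / (2 * a)))
         \<and> pochhammer a b / (a ^ b * exp (real b * (real b - 1) / (2 * a))) \<le> 1)
         \<and> (1 \<le> pochhammer a b / (a ^ b * exp (real b * (real b - 1) / (2 * a)
                 - real b * (real b - 1) * (2 * real b - 1) / (12 * a ^ 2)))
         \<and> pochhammer a b / (a ^ b * exp (real b * (real b - 1) / (2 * a)
                 - real b * (real b - 1) * (2 * real b - 1) / (12 * a ^ 2)))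
             \<le> exp (real b ^ 4 / (12 * a ^ 3)))"
proof -
  have a: "a > 0" by fact
  define P where "P = pochhammer a b"
  have P: "P = (\<Prod>k<b. a + real k)" unfolding P_def pochhammer_prod by (simp add: atLeast0LessThan)
  define E1 where "E1 = real b * (real b - 1) / (2 * a)"
  define E2 where "E2 = real b * (real b - 1) * (2 * real b - 1) / (12 * a ^ 2)"
  define E3 where "E3 = (real b * (real b - 1))^2 / (12 * a ^ 3)"
  have fact1: "a + real k = a * (1 + real k / a)" for k using a by (simp add: field_simps)
  have prodexp: "(\<Prod>k<b. a * exp (g k)) = a ^ b * exp (\<Sum>k<b. g k)" for g :: "nat \<Rightarrow> real"
    by (simp add: prod.distrib exp_sum)
  have s1: "(\<Sum>k<b. real k / a) = E1" unfolding E1_def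
    by (simp add: sum_divide_distrib[symmetric] sum1)
  have s2: "(\<Sum>k<b. (real k / a)^2/2) = E2" unfolding E2_def
    by (simp add: power_divide sum_divide_distrib[symmetric] sum2)
  have s3: "(\<Sum>k<b. (real k / a)^3/3) = E3" unfolding E3_def
    by (simp add: power_divide sum_divide_distrib[symmetric] sum3)
  have up1: "P \<le> a ^ b * exp E1"
  proof -
    have "P \<le> (\<Prod>k<b. a * exp (real k / a))" unfolding P
      by (rule prod_mono) (use a in \<open>auto simp: fact1 intro: mult_left_mono\<close>)
    then show ?thesis by (simp add: prodexp s1)
  qed
  have lo2: "a ^ b * exp (E1 - E2) \<le> P"
  proof -
    have "(\<Prod>k<b. a * exp (real k / a - (real k / a)^2/2)) \<le> P" unfolding P
    proof (rule prod_mono)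
      fix k assume "k \<in> {..<b}"
      have "0 \<le> real k / a" using a by simp
      have q: "0 < 1 + real k / a" using \<open>0 \<le> real k / a\<close> by linarith
      from ln_lower2[OF \<open>0 \<le> real k / a\<close>] have "exp (real k / a - (real k / a)^2/2) \<le> exp (ln (1 + real k / a))"
        by simp
      then have "exp (real k / a - (real k / a)^2/2) \<le> 1 + real k / a" using q by simp
      then show "0 \<le> a * exp (real k / a - (real k / a)^2/2) \<and> a * exp (real k / a - (real k / a)^2/2) \<le> a + real k"
        using a by (simp add: fact1)
    qed
    then show ?thesis by (simp add: prodexp sum_subtractf s1 s2)
  qed
  have up2: "P \<le> a ^ b * exp (E1 - E2 + E3)"
  proof -
    have "P \<le> (\<Prod>k<b. a * exp (real k / a - (real k / a)^2/2 + (real k / a)^3/3))" unfolding P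
    proof (rule prod_mono)
      fix k assume "k \<in> {..<b}"
      have "0 \<le> real k / a" using a by simp
      have q: "0 < 1 + real k / a" using \<open>0 \<le> real k / a\<close> by linarith
      from ln_upper3[OF \<open>0 \<le> real k / a\<close>] have "exp (ln (1 + real k / a)) \<le> exp (real k / a - (real k / a)^2/2 + (real k / a)^3/3)"
        by simp
      then have "1 + real k / a \<le> exp (real k / a - (real k / a)^2/2 + (real k / a)^3/3)" using q by simp
      then show "0 \<le> a + real k \<and> a + real k \<le> a * exp (real k / a - (real k / a)^2/2 + (real k / a)^3/3)"
        using a by (simp add: fact1)
    qed
    then show ?thesis by (simp add: prodexp sum.distrib sum_subtractf s1 s2 s3)
  qed
  have E2b: "E2 \<le> real b ^ 3 / (6 * a^2)"
  proof -
    have "real b * (real b - 1) * (2 * real b - 1) \<le> 2 * real b ^ 3"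
      by (cases b) (auto simp: field_simps power3_eq_cube)
    then have "real b * (real b - 1) * (2 * real b - 1) / (12 * a^2) \<le> 2 * real b ^ 3 / (12 * a^2)"
      by (rule divide_right_mono) simp
    then show ?thesis unfolding E2_def by simp
  qed
  have E3b: "E3 \<le> real b ^ 4 / (12 * a^3)"
  proof -
    have n0: "0 \<le> real b * (real b - 1)" by (cases b) auto
    have "real b * (real b - 1) \<le> real b ^ 2" by (simp add: power2_eq_square algebra_simps)
    from power_mono[OF this n0, of 2] have "(real b * (real b - 1))^2 \<le> real b ^ 4"
      by (simp add: power_mult[symmetric])
    then have "(real b * (real b - 1))^2 / (12 * a^3) \<le> real b ^ 4 / (12 * a^3)"
      by (rule divide_right_mono) (use a in simp)
    then show ?thesis unfolding E3_def by simp
  qed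
  have pos: "0 < a ^ b * exp x" for x using a by simp
  have i1: "exp (- (real b ^ 3) / (6 * a ^ 2)) \<le> P / (a ^ b * exp E1)"
  proof -
    have "exp (- (real b ^ 3) / (6 * a ^ 2)) * (a ^ b * exp E1) = a^b * exp (E1 - real b ^ 3 / (6 * a^2))"
    proof -
      have "exp (- (real b ^ 3) / (6 * a ^ 2)) * exp E1 = exp (- (real b ^ 3) / (6 * a ^ 2) + E1)"
        by (rule exp_add[symmetric])
      also have "- (real b ^ 3) / (6 * a ^ 2) + E1 = E1 - real b ^ 3 / (6 * a^2)" by simp
      finally show ?thesis by (metis mult.assoc mult.commute)
    qed
    also have "\<dots> \<le> a ^ b * exp (E1 - E2)" using E2b a by (intro mult_left_mono) auto
    also have "\<dots> \<le> P" by (rule lo2)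
    finally show ?thesis using pos by (simp add: pos_le_divide_eq)
  qed
  have i2: "P / (a ^ b * exp E1) \<le> 1" using up1 pos by (simp add: pos_divide_le_eq)
  have i3: "1 \<le> P / (a ^ b * exp (E1 - E2))" using lo2 pos by (simp add: pos_le_divide_eq)
  have i4: "P / (a ^ b * exp (E1 - E2)) \<le> exp (real b ^ 4 / (12 * a ^ 3))"
  proof -
    have "P \<le> a ^ b * exp (E1 - E2 + E3)" by (rule up2)
    also have "\<dots> \<le> a ^ b * exp (E1 - E2 + real b ^ 4 / (12 * a ^ 3))" using E3b a by (intro mult_left_mono) auto
    also have "\<dots> = exp (real b ^ 4 / (12 * a ^ 3)) * (a ^ b * exp (E1 - E2))" by (metis exp_add mult.assoc mult.commute)
    finally show ?thesis using pos by (simp add: pos_divide_le_eq)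
  qed
  show ?thesis using i1 i2 i3 i4 unfolding P_def E1_def E2_def by blast
qed

end
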